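(* Let $N\ge 1$, let $\xi\in\mathbf{C}^*$, let $a_1,\dots,a_N\in\mathbf{C}^*$, and let $t_1,\dots,t_N\in\mathbf{C}$. On the phase space $M_{2N}=\Sigma_{t_1}\times\cdots\times\Sigma_{t_N}$ (notation in the context), let $\mathcal{T}(z)$ be the reflection monodromy matrix, $t(z)=\tfrac12\operatorname{tr}\mathcal{T}(z)$ the reflection transfer matrix, and $P_0,\dots,P_N$ the reflection Hamiltonians. Then $$\lim_{z\to 1}(z-z^{-1})\,t(z)=\sum_{j=0}^N P_j=(\xi-\xi^{-1})\prod_{k=1}^N\big(\omega_k-a_k^2-a_k^{-2}\big),$$ where $\omega_k=t_k$ is the value of the Casimir at site $k$.
   Context: $SL_2^*$ denotes the Poisson variety with coordinate ring $\mathbf{C}[e,f,k^{\pm1}]$ and Poisson brackets $\{k,e\}=ke$, $\{k,f\}=-kf$, $\{e,f\}=2(k^2-k^{-2})$. The function $\omega=k^2+k^{-2}+ef$ is a Casimir and $\Sigma_t=\{\omega=t\}$ is a (two-dimensional, for generic $t$) symplectic leaf. The phase space is $M_{2N}=\Sigma_{t_1}\times\cdots\times\Sigma_{t_N}$ with coordinates $(e_j,f_j,k_j)$ at site $j$ (functions at different sites Poisson commute), and $\omega_j=k_j^2+k_j^{-2}+e_jf_j=t_j$. Set $L_j(z)=\begin{pmatrix} zk_j-z^{-1}k_j^{-1} & e_j\\ f_j & zk_j^{-1}-z^{-1}k_j\end{pmatrix}$ and $K(z)=\begin{pmatrix}\xi z-z^{-1}\xi^{-1}&0\\0&\xi z^{-1}-z\xi^{-1}\end{pmatrix}$.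 The reflection monodromy matrix is $$\mathcal{T}(z)=\frac{1}{z-z^{-1}}L_1(a_1z)\cdots L_N(a_Nz)\,K(z)\,L_N(z/a_N)\cdots L_1(z/a_1)=\begin{pmatrix}A(z)&B(z)\\C(z)&D(z)\end{pmatrix},$$ and $t(z)=\frac12\operatorname{tr}\mathcal{T}(z)$. With $w=z^2$, the reflection Hamiltonians $P_0,\dots,P_N$ are the functions on $M_{2N}$ determined by the expansion $$t(z)=\frac12\Big(\frac{w+1}{w-1}\Big)\Big(P_N\frac{w^N+w^{-N}}{2}+P_{N-1}\frac{w^{N-1}+w^{1-N}}{2}+\cdots+P_1\frac{w+w^{-1}}{2}+P_0\Big).$$ *)

theory Defs
  imports "HOL-Analysis.Analysis"
begin

type_synonym mat2 = "complex^2^2"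

definition mat2 :: "complex \<Rightarrow> complex \<Rightarrow> complex \<Rightarrow> complex \<Rightarrow> mat2" where
  "mat2 a b c d = (\<chi> i j. if i = 1 then (if j = 1 then a else b) else (if j = 1 then c else d))"

definition laxL :: "complex \<Rightarrow> complex \<Rightarrow> complex \<Rightarrow> complex \<Rightarrow> mat2" where
  "laxL e f k z = mat2 (z * k - inverse z * inverse k) e f (z * inverse k - inverse z * k)"

definition reflK :: "complex \<Rightarrow> complex \<Rightarrow> mat2" where
  "reflK \<xi> z = mat2 (\<xi> * z - inverse z * inverse \<xi>) 0 0 (\<xi> * inverse z - z * inverse \<xi>)"

fun leftProd :: "(nat \<Rightarrow> complex) \<Rightarrow> (nat \<Rightarrow> complex) \<Rightarrow> (nat \<Rightarrow> complex) \<Rightarrow> (nat \<Rightarrow> complex)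
    \<Rightarrow> nat \<Rightarrow> complex \<Rightarrow> mat2" where
  "leftProd a e f k 0 z = mat 1"
| "leftProd a e f k (Suc n) z = leftProd a e f k n z ** laxL (e (Suc n)) (f (Suc n)) (k (Suc n)) (a (Suc n) * z)"

fun rightProd :: "(nat \<Rightarrow> complex) \<Rightarrow> (nat \<Rightarrow> complex) \<Rightarrow> (nat \<Rightarrow> complex) \<Rightarrow> (nat \<Rightarrow> complex)
    \<Rightarrow> nat \<Rightarrow> complex \<Rightarrow> mat2" where
  "rightProd a e f k 0 z = mat 1"
| "rightProd a e f k (Suc n) z = laxL (e (Suc n)) (f (Suc n)) (k (Suc n)) (z / a (Suc n)) ** rightProd a e f k n z"

definition reflMonodromy :: "nat \<Rightarrow> complex \<Rightarrow> (nat \<Rightarrow> complex) \<Rightarrow> (nat \<Rightarrow> complex) \<Rightarrow> (nat \<Rightarrow> complex)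
    \<Rightarrow> (nat \<Rightarrow> complex) \<Rightarrow> complex \<Rightarrow> mat2" where
  "reflMonodromy N \<xi> a e f k z =
     (let M = leftProd a e f k N z ** reflK \<xi> z ** rightProd a e f k N z
      in (\<chi> i j. (1 / (z - inverse z)) * M $ i $ j))"

definition reflTransfer :: "nat \<Rightarrow> complex \<Rightarrow> (nat \<Rightarrow> complex) \<Rightarrow> (nat \<Rightarrow> complex) \<Rightarrow> (nat \<Rightarrow> complex)
    \<Rightarrow> (nat \<Rightarrow> complex) \<Rightarrow> complex \<Rightarrow> complex" where
  "reflTransfer N \<xi> a e f k z =
     (let T = reflMonodromy N \<xi> a e f k z in (T $ 1 $ 1 + T $ 2 $ 2) / 2)"

text \<open>P = (P_0,...,P_N) are the reflection Hamiltonians (at the given point of the phase space):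
  the coefficients in the expansion of t(z), with w = z^2, valid for all z where t is defined.\<close>
definition reflHamiltonians :: "nat \<Rightarrow> complex \<Rightarrow> (nat \<Rightarrow> complex) \<Rightarrow> (nat \<Rightarrow> complex) \<Rightarrow> (nat \<Rightarrow> complex)
    \<Rightarrow> (nat \<Rightarrow> complex) \<Rightarrow> (nat \<Rightarrow> complex) \<Rightarrow> bool" where
  "reflHamiltonians N \<xi> a e f k P \<longleftrightarrow>
     (\<forall>z. z \<noteq> 0 \<and> z\<^sup>2 \<noteq> 1 \<longrightarrow>
        (let w = z\<^sup>2 in
          reflTransfer N \<xi> a e f k z =
            (1/2) * ((w + 1) / (w - 1)) *
              (P 0 + (\<Sum>j = 1..N. P j * (w ^ j + inverse w ^ j) / 2))))"

end

theory Submission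
  imports Defs "HOL-Computational_Algebra.Polynomial"
begin


lemma mm_entry: "((X::'a::semiring_1^2^2) ** Y) $ i $ j = X$i$1 * Y$1$j + X$i$2 * Y$2$j"
  by (simp add: matrix_matrix_mult_def sum_2)

lemma mat2_nth[simp]: "mat2 a b c d $ 1 $ 1 = a" "mat2 a b c d $ 1 $ 2 = b"
   "mat2 a b c d $ 2 $ 1 = c" "mat2 a b c d $ 2 $ 2 = d"
  by (simp_all add: mat2_def)

lemma mat2_eq_iff: "(X::mat2) = Y \<longleftrightarrow> X$1$1 = Y$1$1 \<and> X$1$2 = Y$1$2 \<and> X$2$1 = Y$2$1 \<and> X$2$2 = Y$2$2"
  by (auto simp: vec_eq_iff forall_2)

definition tr2 :: "mat2 \<Rightarrow> complex" where "tr2 M = M$1$1 + M$2$2"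
definition adj2 :: "mat2 \<Rightarrow> mat2" where "adj2 M = mat2 (M$2$2) (-M$1$2) (-M$2$1) (M$1$1)"
definition cD :: "mat2 \<Rightarrow> mat2" where "cD M = mat2 (M$1$1) (-M$1$2) (-M$2$1) (M$2$2)"
definition sm :: "complex \<Rightarrow> mat2 \<Rightarrow> mat2" where "sm c M = (\<chi> i j. c * M$i$j)"

lemma adj2_mult: "adj2 (A ** B) = adj2 B ** adj2 A"
  by (simp add: mat2_eq_iff adj2_def mm_entry algebra_simps)
lemma cD_mult: "cD (A ** B) = cD A ** cD B"
  by (simp add: mat2_eq_iff cD_def mm_entry algebra_simps)
lemma tr2_adj: "tr2 (adj2 A) = tr2 A" by (simp add: tr2_def adj2_def)
lemma tr2_comm: "tr2 (A ** B) = tr2 (B ** A)" by (simp add: tr2_def mm_entry algebra_simps)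
lemma sm_mult: "sm c A ** sm d B = sm (c*d) (A ** B)"
  by (simp add: mat2_eq_iff sm_def mm_entry algebra_simps)
lemma sm_nth[simp]: "sm c A $ i $ j = c * A $ i $ j" by (simp add: sm_def)
lemma neg_nth: "(- (A::mat2)) $ i $ j = - A $ i $ j" by simp

lemma laxL_inv: "laxL e f k (inverse x) = - adj2 (laxL e f k x)"
  by (simp add: mat2_eq_iff laxL_def adj2_def algebra_simps)
lemma laxL_neg: "laxL e f k (- x) = - cD (laxL e f k x)"
  by (simp add: mat2_eq_iff laxL_def cD_def algebra_simps)
lemma reflK_inv: "reflK \<xi> (inverse z) = adj2 (reflK \<xi> z)"
  by (simp add: mat2_eq_iff reflK_def adj2_def algebra_simps)
lemma adj2_neg: "adj2 (- A) = - adj2 A" by (simp add: mat2_eq_iff adj2_def)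
lemma cD_neg: "cD (- A) = - cD A" by (simp add: mat2_eq_iff cD_def)
lemma negneg_mult: "(- (A::mat2)) ** (B::mat2) ** (- (C::mat2)) = A ** B ** C"
  by (simp add: mat2_eq_iff mm_entry algebra_simps)

definition G where "G a e f k n z = rightProd a e f k n z ** leftProd a e f k n z"

lemma G_Suc: "G a e f k (Suc n) z = laxL (e (Suc n)) (f (Suc n)) (k (Suc n)) (z / a (Suc n))
   ** G a e f k n z ** laxL (e (Suc n)) (f (Suc n)) (k (Suc n)) (a (Suc n) * z)"
  by (simp add: G_def matrix_mul_assoc)

lemma G_0: "G a e f k 0 z = mat 1" by (simp add: G_def)

lemma G_inv: "G a e f k n (inverse z) = adj2 (G a e f k n z)"
proof (induction n)
  case 0
  then show ?case unfolding G_0 by (simp add: mat2_eq_iff adj2_def mat_def)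
next
  case (Suc n)
  have 1: "inverse z / a (Suc n) = inverse (a (Suc n) * z)" by (simp add: field_simps)
  have 2: "a (Suc n) * inverse z = inverse (z / a (Suc n))" by (simp add: field_simps)
  show ?case unfolding G_Suc Suc 1 2 laxL_inv
    by (simp add: negneg_mult adj2_mult matrix_mul_assoc)
qed

lemma G_neg: "G a e f k n (- z) = cD (G a e f k n z)"
proof (induction n)
  case 0
  then show ?case unfolding G_0 by (simp add: mat2_eq_iff cD_def mat_def)
next
  case (Suc n)
  have 1: "- z / a (Suc n) = - (z / a (Suc n))" by simp
  have 2: "a (Suc n) * - z = - (a (Suc n) * z)" by simp
  show ?case unfolding G_Suc Suc 1 2 laxL_neg
    by (simp add: negneg_mult cD_mult matrix_mul_assoc)
qed

definition trM where "trM N \<xi> a e f k z = (let M = leftProd a e f k N z ** reflK \<xi> z ** rightProd a e f k N z in M$1$1 + M$2$2)"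

lemma trM_G: "trM N \<xi> a e f k z = tr2 (reflK \<xi> z ** G a e f k N z)"
proof -
  have "trM N \<xi> a e f k z = tr2 ((leftProd a e f k N z ** reflK \<xi> z) ** rightProd a e f k N z)"
    by (simp add: trM_def tr2_def Let_def)
  also have "\<dots> = tr2 (rightProd a e f k N z ** (leftProd a e f k N z ** reflK \<xi> z))" by (rule tr2_comm)
  also have "\<dots> = tr2 (G a e f k N z ** reflK \<xi> z)" by (simp add: G_def matrix_mul_assoc)
  also have "\<dots> = tr2 (reflK \<xi> z ** G a e f k N z)" by (rule tr2_comm)
  finally show ?thesis .
qed

lemma trM_inv: "trM N \<xi> a e f k (inverse z) = trM N \<xi> a e f k z"
  unfolding trM_G G_inv reflK_inv
  by (metis adj2_mult tr2_adj tr2_comm)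

lemma trM_neg: "trM N \<xi> a e f k (- z) = - trM N \<xi> a e f k z"
  unfolding trM_G G_neg
  by (simp add: tr2_def mm_entry cD_def reflK_def algebra_simps)

lemma reflTransfer_trM: "reflTransfer N \<xi> a e f k z = trM N \<xi> a e f k z / (2 * (z - inverse z))"
proof -
  have g: "\<And>X Y d::complex. (1/d*X + 1/d*Y)/2 = (X+Y)/(2*d)"
    by (case_tac "d=0") (simp_all add: field_simps)
  show ?thesis
    unfolding reflTransfer_def reflMonodromy_def trM_def Let_def vec_lambda_beta by (rule g)
qed




definition evm :: "complex \<Rightarrow> complex poly^2^2 \<Rightarrow> mat2" where
  "evm z X = (\<chi> i j. poly (X$i$j) z)"

lemma evm_mult: "evm z (X ** Y) = evm z X ** evm z Y"
  by (simp add: evm_def mat2_eq_iff mm_entry)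

definition Lp :: "complex \<Rightarrow> complex \<Rightarrow> complex \<Rightarrow> complex \<Rightarrow> complex poly^2^2" where
  "Lp c e f k = (\<chi> i j. if i=1 then (if j=1 then [:-(inverse (c*k)),0,c*k:] else [:0,e:])
      else (if j=1 then [:0,f:] else [:-(k * inverse c), 0, c * inverse k:]))"

lemma Lp_eval: "z \<noteq> 0 \<Longrightarrow> evm z (Lp c e f k) = sm z (laxL e f k (c*z))"
  by (simp add: mat2_eq_iff evm_def Lp_def laxL_def field_simps power2_eq_square)

lemma Lp_deg: "degree (Lp c e f k $ i $ j) \<le> 2"
  using exhaust_2[of i] exhaust_2[of j] by (auto simp: Lp_def)

lemma mm_deg: assumes "\<And>i j. degree ((X::complex poly^2^2)$i$j) \<le> dx" "\<And>i j. degree (Y$i$j) \<le> dy"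
  shows "degree ((X ** Y)$i$j) \<le> dx + dy"
proof -
  have "\<And>p q. degree (X$i$p * Y$p$j) \<le> dx + dy"
    by (rule order.trans[OF degree_mult_le]) (intro add_mono assms)
  then show ?thesis unfolding mm_entry
    by (meson degree_add_le)
qed

lemma G_poly: "\<exists>A::complex poly^2^2. (\<forall>i j. degree (A$i$j) \<le> 4*n) \<and>
   (\<forall>z. z \<noteq> 0 \<longrightarrow> evm z A = sm (z^(2*n)) (G a e f k n z))"
proof (induction n)
  case 0
  show ?case
    by (rule exI[of _ "mat 1"]) (simp add: evm_def G_0 mat2_eq_iff mat_def)
next
  case (Suc n)
  then obtain A where A: "\<forall>i j. degree (A$i$j) \<le> 4*n"
    "\<forall>z. z \<noteq> 0 \<longrightarrow> evm z A = sm (z^(2*n)) (G a e f k n z)" by blast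
  define A' where "A' = Lp (inverse (a (Suc n))) (e (Suc n)) (f (Suc n)) (k (Suc n)) ** A
     ** Lp (a (Suc n)) (e (Suc n)) (f (Suc n)) (k (Suc n))"
  have "\<forall>i j. degree (A'$i$j) \<le> 4 * Suc n"
  proof (intro allI)
    fix i j
    have "degree (A'$i$j) \<le> (2 + 4*n) + 2"
      unfolding A'_def
      by (intro mm_deg Lp_deg) (use A(1) in auto)
    then show "degree (A'$i$j) \<le> 4 * Suc n" by simp
  qed
  moreover have "\<forall>z. z \<noteq> 0 \<longrightarrow> evm z A' = sm (z^(2*Suc n)) (G a e f k (Suc n) z)"
  proof (intro allI impI)
    fix z :: complex assume z: "z \<noteq> 0"
    have 1: "z / a (Suc n) = inverse (a (Suc n)) * z" by (simp add: field_simps)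
    show "evm z A' = sm (z^(2*Suc n)) (G a e f k (Suc n) z)"
      unfolding A'_def evm_mult Lp_eval[OF z] A(2)[rule_format, OF z] G_Suc 1 sm_mult
      by (simp add: algebra_simps power2_eq_square)
  qed
  ultimately show ?case by blast
qed




lemma poly_sum_D: fixes z :: complex and D :: nat assumes "degree p \<le> D" shows "poly p z = (\<Sum>i\<le>D. coeff p i * z^i)"
  unfolding poly_altdef
  by (rule sum.mono_neutral_left) (use assms in \<open>auto simp: coeff_eq_0\<close>)

lemma coeffs_unique:
  fixes c d :: "nat \<Rightarrow> complex"
  assumes inf: "infinite A" and eq: "\<And>z. z \<in> A \<Longrightarrow> (\<Sum>i\<le>D. c i * z^i) = (\<Sum>i\<le>D. d i * z^i)"
    and i: "i \<le> D"
  shows "c i = d i"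
proof -
  define p where "p = (\<Sum>i\<le>D. monom (c i - d i) i)"
  have pv: "poly p z = (\<Sum>i\<le>D. c i * z^i) - (\<Sum>i\<le>D. d i * z^i)" for z
    by (simp add: p_def poly_sum poly_monom algebra_simps sum_subtractf)
  have "p = 0"
  proof (rule ccontr)
    assume "p \<noteq> 0"
    then have "finite {x. poly p x = 0}" by (rule poly_roots_finite)
    moreover have "A \<subseteq> {x. poly p x = 0}" using eq pv by auto
    ultimately show False using inf finite_subset by blast
  qed
  then have "coeff p i = 0" by simp
  moreover have "coeff p i = c i - d i"
    using i by (simp add: p_def coeff_sum coeff_monom)
  ultimately show ?thesis by simp
qed

lemma sum_rev: fixes D :: nat shows "(\<Sum>i\<le>D. g i) = (\<Sum>i\<le>D. g (D - i))"
  by (rule sum.reindex_bij_witness[of _ "\<lambda>i. D - i" "\<lambda>i. D - i"]) (auto simp: diff_diff_cancel)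

lemma poly_rev: fixes z :: complex and D :: nat assumes "z \<noteq> 0" "degree p \<le> D"
  shows "z^D * poly p (inverse z) = (\<Sum>i\<le>D. coeff p (D-i) * z^i)"
proof -
  have "z^D * poly p (inverse z) = (\<Sum>i\<le>D. coeff p i * z^(D-i))"
    unfolding poly_sum_D[OF assms(2)] sum_distrib_left
    by (rule sum.cong) (auto simp: power_diff[OF assms(1)] divide_inverse power_inverse)
  also have "\<dots> = (\<Sum>i\<le>D. coeff p (D-i) * z^i)"
    by (subst sum_rev) simp
  finally show ?thesis .
qed

lemma poly_neg_sum: fixes z :: complex and D :: nat assumes "degree p \<le> D"
  shows "poly p (-z) = (\<Sum>i\<le>D. ((-1)^i * coeff p i) * z^i)"
  unfolding poly_sum_D[OF assms]
  by (rule sum.cong) (simp_all add: power_minus[of z])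

lemma even_sum: fixes u :: "nat \<Rightarrow> complex" and x :: complex assumes "\<forall>i. odd i \<longrightarrow> u i = 0"
  shows "(\<Sum>i\<le>2*M. u i * x^i) = (\<Sum>l\<le>M. u (2*l) * x^(2*l))"
proof (induction M)
  case 0
  then show ?case by simp
next
  case (Suc M)
  have "2 * Suc M = Suc (Suc (2*M))" by simp
  then show ?case using Suc assms by (simp del: mult_Suc_right)
qed

lemma palin:
  fixes v :: "nat \<Rightarrow> complex"
  assumes sym: "\<forall>l\<le>2*N. v l = v (2*N - l)" and y: "y \<noteq> 0"
  shows "(\<Sum>l\<le>2*N. v l * y^l) = y^N * (v N + (\<Sum>j=1..N. v (N+j) * (y^j + inverse y^j)))"
proof -
  have set: "{..2*N} = {..<N} \<union> ({N} \<union> {N<..2*N})" by auto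
  have "(\<Sum>l\<le>2*N. v l * y^l) = (\<Sum>l<N. v l * y^l) + (v N * y^N + (\<Sum>l\<in>{N<..2*N}. v l * y^l))"
    unfolding set by (subst sum.union_disjoint; auto)+
  also have "(\<Sum>l\<in>{N<..2*N}. v l * y^l) = (\<Sum>j=1..N. v (N+j) * y^(N+j))"
    by (rule sum.reindex_bij_witness[of _ "\<lambda>j. N + j" "\<lambda>l. l - N"]) auto
  also have "(\<Sum>l<N. v l * y^l) = (\<Sum>j=1..N. v (N-j) * y^(N-j))"
    by (rule sum.reindex_bij_witness[of _ "\<lambda>j. N - j" "\<lambda>l. N - l"]) auto
  also have "\<dots> = (\<Sum>j=1..N. v (N+j) * (y^N * inverse y^j))"
  proof (rule sum.cong)
    fix j assume j: "j \<in> {1..N}"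
    have "v (N-j) = v (2*N - (N - j))" by (rule sym[rule_format]) (use j in simp)
    also have "2*N - (N-j) = N+j" using j by auto
    finally show "v (N-j) * y^(N-j) = v (N+j) * (y^N * inverse y^j)"
      using j y by (simp add: power_diff field_simps)
  qed simp
  finally have L: "(\<Sum>l\<le>2*N. v l * y^l) = (\<Sum>j=1..N. v (N+j) * (y^N * inverse y^j)) + (v N * y^N + (\<Sum>j=1..N. v (N+j) * y^(N+j)))" .
  have R: "y^N * (v N + (\<Sum>j=1..N. v (N+j) * (y^j + inverse y^j))) = y^N * v N + (\<Sum>j=1..N. v (N+j) * y^(N+j) + v (N+j) * (y^N * inverse y^j))"
    unfolding distrib_left sum_distrib_left by (intro arg_cong2[where f="(+)"] sum.cong refl) (auto simp: power_add distrib_left mult_ac)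
  show ?thesis unfolding L R sum.distrib by (simp add: algebra_simps)
qed




lemma trM_i: "trM N \<xi> a e f k \<i> = 0"
proof -
  have "trM N \<xi> a e f k \<i> = trM N \<xi> a e f k (inverse \<i>)" by (rule trM_inv[symmetric])
  also have "inverse \<i> = - \<i>" by simp
  also have "trM N \<xi> a e f k (- \<i>) = - trM N \<xi> a e f k \<i>" by (rule trM_neg)
  finally show ?thesis by simp
qed

lemma exists_U: "\<exists>U. degree U \<le> 4*N \<and>
   (\<forall>z. z \<noteq> 0 \<longrightarrow> trM N \<xi> a e f k z * z^(2*N+1) = (z^2+1) * poly U z)"
proof -
  obtain A where A: "\<forall>i j. degree (A$i$j) \<le> 4*N"
    "\<forall>z. z \<noteq> 0 \<longrightarrow> evm z A = sm (z^(2*N)) (G a e f k N z)"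
    using G_poly by blast
  define T where "T = [:-(inverse \<xi>), 0, \<xi>:] * A$1$1 + [:\<xi>, 0, -(inverse \<xi>):] * A$2$2"
  have Tv: "poly T z = trM N \<xi> a e f k z * z^(2*N+1)" if z: "z \<noteq> 0" for z
  proof -
    have e: "poly (A$i$j) z = z^(2*N) * G a e f k N z $ i $ j" for i j
      using arg_cong[OF A(2)[rule_format, OF z], of "\<lambda>M. M$i$j"] by (simp add: evm_def)
    show ?thesis unfolding T_def trM_G
      by (simp add: e tr2_def mm_entry reflK_def z field_simps power2_eq_square)
  qed
  have degT: "degree T \<le> 4*N + 2"
  proof -
    have d1: "degree [:-(inverse \<xi>), 0, \<xi>:] \<le> 2" "degree [:\<xi>, 0, -(inverse \<xi>):] \<le> 2"
      by (auto simp: degree_pCons_eq_if)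
    have "degree ([:-(inverse \<xi>), 0, \<xi>:] * A$1$1) \<le> 2 + 4*N"
      by (rule order.trans[OF degree_mult_le add_mono[OF d1(1) A(1)[rule_format]]])
    moreover have "degree ([:\<xi>, 0, -(inverse \<xi>):] * A$2$2) \<le> 2 + 4*N"
      by (rule order.trans[OF degree_mult_le add_mono[OF d1(2) A(1)[rule_format]]])
    ultimately show ?thesis unfolding T_def
      by (metis add.commute degree_add_le)
  qed
  have "poly T \<i> = 0" using Tv[of \<i>] trM_i by simp
  then obtain T1 where T1: "T = [:-\<i>, 1:] * T1" using poly_eq_0_iff_dvd by (metis dvdE)
  have "poly T (-\<i>) = 0" using Tv[of "-\<i>"] trM_neg[of N \<xi> a e f k \<i>] trM_i by simp
  then have "poly T1 (-\<i>) = 0" unfolding T1 by simp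
  then obtain U where U: "T1 = [:\<i>, 1:] * U" using poly_eq_0_iff_dvd by (metis dvdE minus_minus)
  have TU: "T = [:-\<i>, 1:] * ([:\<i>, 1:] * U)" using T1 U by simp
  have degU: "degree U \<le> 4*N"
  proof (cases "U = 0")
    case True then show ?thesis by simp
  next
    case False
    have nz: "[:\<i>,1:] * U \<noteq> 0" by (rule no_zero_divisors[OF _ False]) simp
    have d1: "degree ([:\<i>,1:] * U) = 1 + degree U" using False by (subst degree_mult_eq) auto
    have "degree T = 1 + degree ([:\<i>,1:] * U)" unfolding TU using nz by (subst degree_mult_eq) auto
    with d1 have "degree T = 1 + (1 + degree U)" by simp
    then show ?thesis using degT by simp
  qed
  have "\<forall>z. z \<noteq> 0 \<longrightarrow> trM N \<xi> a e f k z * z^(2*N+1) = (z^2+1) * poly U z"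
  proof (intro allI impI)
    fix z :: complex assume "z \<noteq> 0"
    then have "trM N \<xi> a e f k z * z^(2*N+1) = poly T z" using Tv by simp
    also have "\<dots> = (z - \<i>) * ((z + \<i>) * poly U z)" unfolding TU
      by (simp add: algebra_simps)
    also have "\<dots> = (z^2+1) * poly U z"
      by (simp add: algebra_simps power2_eq_square)
    finally show "trM N \<xi> a e f k z * z^(2*N+1) = (z^2+1) * poly U z" .
  qed
  with degU show ?thesis by blast
qed




lemma LL: assumes "a \<noteq> 0" "k \<noteq> 0" "k^2 + inverse (k^2) + e * f = t"
  shows "laxL e f k (1 / a) ** laxL e f k (a * 1) = sm (t - a^2 - inverse (a^2)) (mat 1)"
  unfolding assms(3)[symmetric]
  using assms(1,2) by (simp add: mat2_eq_iff mm_entry laxL_def mat_def field_simps power2_eq_square)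

lemma G1: assumes "\<forall>j\<in>{1..N}. a j \<noteq> 0" "\<forall>j\<in>{1..N}. k j \<noteq> 0 \<and> (k j)\<^sup>2 + inverse ((k j)\<^sup>2) + e j * f j = t j"
  shows "n \<le> N \<Longrightarrow> G a e f k n 1 = sm (\<Prod>j = 1..n. t j - (a j)\<^sup>2 - inverse ((a j)\<^sup>2)) (mat 1)"
proof (induction n)
  case 0
  then show ?case by (simp add: G_0 mat2_eq_iff)
next
  case (Suc n)
  have s: "Suc n \<in> {1..N}" using Suc by auto
  have "G a e f k (Suc n) 1 = laxL (e (Suc n)) (f (Suc n)) (k (Suc n)) (1 / a (Suc n))
   ** sm (\<Prod>j = 1..n. t j - (a j)\<^sup>2 - inverse ((a j)\<^sup>2)) (mat 1) ** laxL (e (Suc n)) (f (Suc n)) (k (Suc n)) (a (Suc n) * 1)"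
    using Suc by (simp add: G_Suc)
  also have "\<dots> = sm (\<Prod>j = 1..n. t j - (a j)\<^sup>2 - inverse ((a j)\<^sup>2))
      (laxL (e (Suc n)) (f (Suc n)) (k (Suc n)) (1 / a (Suc n)) ** laxL (e (Suc n)) (f (Suc n)) (k (Suc n)) (a (Suc n) * 1))"
    by (simp add: mat2_eq_iff mm_entry mat_def algebra_simps)
  also have "\<dots> = sm (\<Prod>j = 1..Suc n. t j - (a j)\<^sup>2 - inverse ((a j)\<^sup>2)) (mat 1)"
    unfolding LL[OF assms(1)[rule_format, OF s] conjunct1[OF assms(2)[rule_format, OF s]] conjunct2[OF assms(2)[rule_format, OF s]]]
    by (simp add: mat2_eq_iff mat_def)
  finally show ?case .
qed

lemma trM1: assumes "\<forall>j\<in>{1..N}. a j \<noteq> 0" "\<forall>j\<in>{1..N}. k j \<noteq> 0 \<and> (k j)\<^sup>2 + inverse ((k j)\<^sup>2) + e j * f j = t j"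
  shows "trM N \<xi> a e f k 1 = 2 * ((\<xi> - inverse \<xi>) * (\<Prod>j = 1..N. t j - (a j)\<^sup>2 - inverse ((a j)\<^sup>2)))"
  unfolding trM_G G1[OF assms order.refl]
  by (simp add: tr2_def mm_entry reflK_def mat_def algebra_simps)




lemma inf_A: "infinite {z::complex. z \<noteq> 0 \<and> z^2 \<noteq> -1}"
proof -
  have "UNIV - {0, \<i>, -\<i>} \<subseteq> {z::complex. z \<noteq> 0 \<and> z^2 \<noteq> -1}"
  proof
    fix z :: complex assume z: "z \<in> UNIV - {0, \<i>, -\<i>}"
    have "z^2 \<noteq> -1"
    proof
      assume "z^2 = -1"
      then have "(z - \<i>) * (z + \<i>) = 0" by (simp add: algebra_simps power2_eq_square)
      then show False using z by (auto simp: add_eq_0_iff2)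
    qed
    then show "z \<in> {z::complex. z \<noteq> 0 \<and> z^2 \<noteq> -1}" using z by auto
  qed
  moreover have "infinite (UNIV - {0, \<i>, -\<i>::complex})"
    by (rule Diff_infinite_finite) (auto simp: infinite_UNIV_char_0)
  ultimately show ?thesis using finite_subset by blast
qed

lemma ev_at1: "eventually (\<lambda>z::complex. z \<noteq> 0 \<and> z^2 \<noteq> 1) (at 1)"
proof -
  have "\<forall>z\<in>UNIV. z \<noteq> 1 \<and> dist z 1 < 1 \<longrightarrow> z \<noteq> 0 \<and> z^2 \<noteq> (1::complex)"
  proof (intro ballI impI)
    fix z :: complex assume z: "z \<noteq> 1 \<and> dist z 1 < 1"
    have 1: "z \<noteq> 0" using z by auto
    have 2: "z^2 \<noteq> 1"
    proof
      assume "z^2 = 1"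
      then have "z = -1" using z by (auto simp: power2_eq_1_iff)
      then show False using z by (simp add: dist_norm)
    qed
    show "z \<noteq> 0 \<and> z^2 \<noteq> 1" using 1 2 by blast
  qed
  then show ?thesis unfolding eventually_at by (intro exI[of _ 1] conjI[OF zero_less_one])
qed




theorem mainTheorem1:
  fixes N :: nat and \<xi> :: complex and a t e f k :: "nat \<Rightarrow> complex"
  assumes N: "N \<ge> 1"
    and xi: "\<xi> \<noteq> 0"
    and a: "\<forall>j\<in>{1..N}. a j \<noteq> 0"
    and pt: "\<forall>j\<in>{1..N}. k j \<noteq> 0 \<and> (k j)\<^sup>2 + inverse ((k j)\<^sup>2) + e j * f j = t j"
  shows "(\<exists>P. reflHamiltonians N \<xi> a e f k P) \<and>
    (\<forall>P. reflHamiltonians N \<xi> a e f k P \<longrightarrow>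
       ((\<lambda>z. (z - inverse z) * reflTransfer N \<xi> a e f k z) \<longlongrightarrow> (\<Sum>j = 0..N. P j)) (at 1) \<and>
       (\<Sum>j = 0..N. P j) = (\<xi> - inverse \<xi>) * (\<Prod>j = 1..N. t j - (a j)\<^sup>2 - inverse ((a j)\<^sup>2)))"
proof -
  obtain U where degU: "degree U \<le> 4*N" and
    Uv: "\<forall>z. z \<noteq> 0 \<longrightarrow> trM N \<xi> a e f k z * z^(2*N+1) = (z^2+1) * poly U z"
    using exists_U by blast
  define u where "u = coeff U"
  have nz1: "z^2 + 1 \<noteq> 0" if "z^2 \<noteq> -1" for z :: complex
    using that by (auto simp: add_eq_0_iff2)
  have U1: "poly U z = z^(4*N) * poly U (inverse z)" if z: "z \<noteq> 0" "z^2 \<noteq> -1" for z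
  proof -
    let ?t = "trM N \<xi> a e f k z"
    define y where "y = z^(2*N+1)"
    have zi: "inverse z \<noteq> 0" using z by simp
    have a1: "?t * y = (z^2+1) * poly U z" using Uv z by (simp add: y_def)
    have a2: "?t * inverse y = ((inverse z)^2+1) * poly U (inverse z)"
      using Uv[rule_format, OF zi] trM_inv[of N \<xi> a e f k z] by (simp add: y_def power_inverse)
    have e4: "z^(4*N) = z^(2*N) * z^(2*N)"
    proof -
      have "4*N = 2*N+2*N" by simp
      then show ?thesis by (metis power_add)
    qed
    have yy: "y * y = z^(4*N) * z^2" unfolding e4 y_def power_add power2_eq_square by (simp add: algebra_simps)
    have W: "z^(4*N) = y*y/z^2" using z(1) yy by (simp add: field_simps)
    have y0: "y \<noteq> 0" using z(1) by (simp add: y_def)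
    have e2: "(inverse z)^2 + 1 = (z^2+1)/z^2" using z(1) by (simp add: field_simps power_inverse)
    have pu: "poly U z = ?t * y / (z^2+1)" using a1 nz1[OF z(2)] by (simp add: field_simps)
    have pi: "poly U (inverse z) = ?t * inverse y * z^2 / (z^2+1)"
      using a2 nz1[OF z(2)] z(1) unfolding e2 by (simp add: field_simps)
    have gen: "\<And>t y q s::complex. y\<noteq>0 \<Longrightarrow> q\<noteq>0 \<Longrightarrow> s\<noteq>0 \<Longrightarrow> t*y/s = y*y/q * (t*inverse y*q/s)"
      by (simp add: field_simps)
    show ?thesis unfolding pu pi W using z(1) y0 nz1[OF z(2)] by (intro gen) auto
  qed
  have U2: "poly U (-z) = poly U z" if z: "z \<noteq> 0" "z^2 \<noteq> -1" for z
  proof -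
    let ?t = "trM N \<xi> a e f k z"
    have mz: "-z \<noteq> 0" using z by simp
    have a1: "?t * z^(2*N+1) = (z^2+1) * poly U z" using Uv z by simp
    have a3: "?t * z^(2*N+1) = (z^2+1) * poly U (-z)"
      using Uv[rule_format, OF mz] trM_neg[of N \<xi> a e f k z] by simp
    show ?thesis using a1 a3 nz1[OF z(2)] by simp
  qed
  have symc: "u i = u (4*N - i)" if i: "i \<le> 4*N" for i
  proof (rule coeffs_unique[OF inf_A _ i])
    fix z :: complex assume "z \<in> {z. z \<noteq> 0 \<and> z^2 \<noteq> -1}"
    then have z: "z \<noteq> 0" "z^2 \<noteq> -1" by auto
    show "(\<Sum>i\<le>4*N. u i * z^i) = (\<Sum>i\<le>4*N. u (4*N - i) * z^i)"
      unfolding u_def poly_sum_D[OF degU, symmetric] poly_rev[OF z(1) degU, symmetric]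
      by (rule U1[OF z])
  qed
  have oddc: "\<forall>i. odd i \<longrightarrow> u i = 0"
  proof (intro allI impI)
    fix i :: nat assume odd: "odd i"
    show "u i = 0"
    proof (cases "i \<le> 4*N")
      case False then show ?thesis using degU by (simp add: u_def coeff_eq_0)
    next
      case True
      have "u i = (-1)^i * u i"
      proof (rule coeffs_unique[OF inf_A _ True])
        fix z :: complex assume "z \<in> {z. z \<noteq> 0 \<and> z^2 \<noteq> -1}"
        then have z: "z \<noteq> 0" "z^2 \<noteq> -1" by auto
        show "(\<Sum>i\<le>4*N. u i * z^i) = (\<Sum>i\<le>4*N. ((-1)^i * u i) * z^i)"
          unfolding u_def poly_sum_D[OF degU, symmetric] poly_neg_sum[OF degU, symmetric]
          by (rule U2[OF z, symmetric])
      qed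
      then show ?thesis using odd by simp
    qed
  qed
  have Urep: "poly U z = (z^2)^N * (u (2*N) + (\<Sum>j=1..N. u (2*(N+j)) * ((z^2)^j + inverse (z^2)^j)))"
    if z: "z \<noteq> 0" for z :: complex
  proof -
    have d: "degree U \<le> 2*(2*N)" using degU by simp
    have "poly U z = (\<Sum>i\<le>2*(2*N). u i * z^i)" unfolding u_def by (rule poly_sum_D[OF d])
    also have "\<dots> = (\<Sum>l\<le>2*N. u (2*l) * z^(2*l))" by (rule even_sum[OF oddc])
    also have "\<dots> = (\<Sum>l\<le>2*N. u (2*l) * (z^2)^l)" by (simp add: power_mult)
    also have "\<dots> = (z^2)^N * (u (2*N) + (\<Sum>j=1..N. u (2*(N+j)) * ((z^2)^j + inverse (z^2)^j)))"
    proof (rule palin[where v="\<lambda>l. u (2*l)"])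
      show "\<forall>l\<le>2*N. u (2*l) = u (2*(2*N - l))"
      proof (intro allI impI)
        fix l assume l: "l \<le> 2*N"
        have "u (2*l) = u (4*N - 2*l)" by (rule symc) (use l in simp)
        also have "4*N - 2*l = 2*(2*N - l)" by simp
        finally show "u (2*l) = u (2*(2*N - l))" .
      qed
      show "z^2 \<noteq> 0" using z by simp
    qed
    finally show ?thesis .
  qed
  define P where "P j = (if j = 0 then u (2*N) else 2 * u (2*(N+j)))" for j
  have hamil: "reflHamiltonians N \<xi> a e f k P"
    unfolding reflHamiltonians_def Let_def
  proof (intro allI impI)
    fix z :: complex assume z: "z \<noteq> 0 \<and> z^2 \<noteq> 1"
    define S where "S = u (2*N) + (\<Sum>j=1..N. u (2*(N+j)) * ((z^2)^j + inverse (z^2)^j))"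
    have SP: "P 0 + (\<Sum>j = 1..N. P j * ((z^2)^j + inverse (z^2)^j) / 2) = S"
      unfolding S_def P_def by (auto intro!: sum.cong)
    have pw: "z^(2*N+1) = (z^2)^N * z" by (simp add: power_mult)
    have e: "trM N \<xi> a e f k z * ((z^2)^N * z) = (z^2+1) * ((z^2)^N * S)"
      using Uv[rule_format, of z] z unfolding pw Urep[OF conjunct1[OF z]] S_def by simp
    have nzq: "(z^2)^N * z \<noteq> 0" using z by simp
    have tr: "trM N \<xi> a e f k z = (z^2+1) * ((z^2)^N * S) / ((z^2)^N * z)"
      using e nzq by (simp add: eq_divide_eq)
    have zz: "z - inverse z = (z^2 - 1)/z" using z by (simp add: field_simps power2_eq_square)
    have q: "(z^2)^N \<noteq> 0" using z by simp
    have w1: "z^2 - 1 \<noteq> 0" using z by simp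
    show "reflTransfer N \<xi> a e f k z = 1/2 * ((z^2+1)/(z^2-1)) * (P 0 + (\<Sum>j = 1..N. P j * ((z^2)^j + inverse (z^2)^j) / 2))"
      unfolding SP reflTransfer_trM tr zz using z q w1 by (simp add: field_simps)
  qed
  have trv: "trM N \<xi> a e f k 1 = 2 * ((\<xi> - inverse \<xi>) * (\<Prod>j = 1..N. t j - (a j)\<^sup>2 - inverse ((a j)\<^sup>2)))"
    by (rule trM1[OF a pt])
  have main: "((\<lambda>z. (z - inverse z) * reflTransfer N \<xi> a e f k z) \<longlongrightarrow> (\<Sum>j = 0..N. Q j)) (at 1) \<and>
       (\<Sum>j = 0..N. Q j) = (\<xi> - inverse \<xi>) * (\<Prod>j = 1..N. t j - (a j)\<^sup>2 - inverse ((a j)\<^sup>2))"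
    if Q: "reflHamiltonians N \<xi> a e f k Q" for Q
  proof -
    define g where "g z = 1/2 * (z + inverse z) * (Q 0 + (\<Sum>j = 1..N. Q j * ((z^2)^j + inverse (z^2)^j) / 2))" for z :: complex
    define h where "h z = (z^2+1) * poly U z / z^(2*N+1) / 2" for z :: complex
    let ?f = "\<lambda>z. (z - inverse z) * reflTransfer N \<xi> a e f k z"
    have evg: "eventually (\<lambda>z. g z = ?f z) (at 1)"
      using ev_at1
    proof (rule eventually_mono)
      fix z :: complex assume z: "z \<noteq> 0 \<and> z^2 \<noteq> 1"
      have w1: "z^2 - 1 \<noteq> 0" using z by simp
      have "reflTransfer N \<xi> a e f k z = 1/2 * ((z^2+1)/(z^2-1)) * (Q 0 + (\<Sum>j = 1..N. Q j * ((z^2)^j + inverse (z^2)^j) / 2))"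
        using Q z unfolding reflHamiltonians_def Let_def by blast
      then show "g z = ?f z" unfolding g_def using z w1
        by (simp add: field_simps power2_eq_square)
    qed
    have evh: "eventually (\<lambda>z. h z = ?f z) (at 1)"
      using ev_at1
    proof (rule eventually_mono)
      fix z :: complex assume z: "z \<noteq> 0 \<and> z^2 \<noteq> 1"
      have zi: "z - inverse z \<noteq> 0" using z by (auto simp: field_simps power2_eq_square)
      have "trM N \<xi> a e f k z * z^(2*N+1) = (z^2+1) * poly U z" using Uv z by blast
      then show "h z = ?f z" unfolding h_def reflTransfer_trM using z zi
        by (simp add: field_simps)
    qed
    have cg: "isCont g 1" unfolding g_def by (intro continuous_intros) auto
    have ch: "isCont h 1" unfolding h_def by (intro continuous_intros) auto
    have g1: "g 1 = (\<Sum>j = 0..N. Q j)"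
      unfolding g_def by (simp add: sum.atLeast_Suc_atMost[of 0 N])
    have h1: "h 1 = (\<xi> - inverse \<xi>) * (\<Prod>j = 1..N. t j - (a j)\<^sup>2 - inverse ((a j)\<^sup>2))"
      using Uv[rule_format, of 1] trv unfolding h_def by simp
    have l1: "(?f \<longlongrightarrow> g 1) (at 1)"
      using cg evg unfolding isCont_def by (rule Lim_transform_eventually)
    have l2: "(?f \<longlongrightarrow> h 1) (at 1)"
      using ch evh unfolding isCont_def by (rule Lim_transform_eventually)
    have "g 1 = h 1" using tendsto_unique[OF at_neq_bot l1 l2] .
    then show ?thesis using l1 g1 h1 by simp
  qed
  show ?thesis using hamil main by blast
qed


end
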